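(* Let $\theta$ be an irrational number whose best rational approximants $(p_n/q_n)_{n\ge0}$ satisfy $\lim_{n\to\infty}q_n^{-1}\log q_{n+1}=\infty$, and let $q'$ be a subsequence of $(q_n)_{n\ge0}$. Then there exists a dense $G_\delta$-subset $E_1$ of $l^\infty$ such that for every $u\in E_1$: $\mathbb{C}\times\Delta$ is a Fatou component of $A_{\theta,q',u}$, and for every $(w,z)\in\mathbb{C}^2$ with $|z|>1$ the forward orbit of $(w,z)$ under $A_{\theta,q',u}$ is unbounded. The same two conclusions hold for $A_{\theta,q'}$, i.e. for the constant sequence $u_m\equiv1$.
   Context: Best rational approximants $p_n/q_n$ of an irrational $\theta$ are its continued fraction convergents, with $\gcd(p_n,q_n)=1$, $q_n\ge0$. A subsequence $q'$ of $(q_n)$ means $q'_n=q_{k_n}$ with $k_n$ strictly increasing. $l^\infty$ is the complex Banach space of bounded complex sequences $u=(u_m)_{m\ge0}$ with the sup norm. $\Delta$ is the open unit disc. For $u\in l^\infty$, $\varphi_{\theta,q',u}(z)=z e^{2\pi i\theta}\sum_{n=0}^\infty u_{q'_n}(1-e^{2\pi i q'_n\theta})z^{q'_n}$ (an entire function under the growth hypothesis), and $A_{\theta,q',u}(w,z)=(e^{2\pi i\theta}w+\varphi_{\theta,q',u}(z),e^{2\pi i\theta}z)$, an automorphism of $\mathbb{C}^2$; $A_{\theta,q'}$ denotes $A_{\theta,q',u}$ with $u_m\equiv1$. For a holomorphic map $F:\mathbb{C}^2\to\mathbb{C}^2$, the Fatou set is the set of points having a neighbourhood on which the family of iterates $\{F^{\circ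 N}\}_{N\ge0}$ is equicontinuous (Euclidean metric); a Fatou component is a connected component of the Fatou set. *)

theory Defs
  imports "HOL-Analysis.Analysis"
begin

fun cf_rem :: "real \<Rightarrow> nat \<Rightarrow> real" where
  "cf_rem x 0 = x"
| "cf_rem x (Suc n) = 1 / (cf_rem x n - of_int \<lfloor>cf_rem x n\<rfloor>)"

definition cf_a :: "real \<Rightarrow> nat \<Rightarrow> int" where
  "cf_a x n = \<lfloor>cf_rem x n\<rfloor>"

fun cf_q :: "real \<Rightarrow> nat \<Rightarrow> int" where
  "cf_q x 0 = 1"
| "cf_q x (Suc 0) = cf_a x 1"
| "cf_q x (Suc (Suc n)) = cf_a x (Suc (Suc n)) * cf_q x (Suc n) + cf_q x n"

text \<open>The entire function phi_{theta,q',u}; qs is the subsequence q'.\<close>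
definition phi :: "real \<Rightarrow> (nat \<Rightarrow> nat) \<Rightarrow> (nat \<Rightarrow> complex) \<Rightarrow> complex \<Rightarrow> complex" where
  "phi \<theta> qs u z = z * exp (2 * pi * \<i> * \<theta>) *
     (\<Sum>n. u (qs n) * (1 - exp (2 * pi * \<i> * of_nat (qs n) * \<theta>)) * z ^ qs n)"

definition A_map :: "real \<Rightarrow> (nat \<Rightarrow> nat) \<Rightarrow> (nat \<Rightarrow> complex) \<Rightarrow> complex \<times> complex \<Rightarrow> complex \<times> complex" where
  "A_map \<theta> qs u = (\<lambda>(w, z). (exp (2 * pi * \<i> * \<theta>) * w + phi \<theta> qs u z, exp (2 * pi * \<i> * \<theta>) * z))"

definition fatou_set :: "('a::metric_space \<Rightarrow> 'a) \<Rightarrow> 'a set" where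
  "fatou_set F = {x. \<exists>U. open U \<and> x \<in> U \<and>
     (\<forall>y\<in>U. \<forall>e>0. \<exists>d>0. \<forall>y'\<in>U. dist y' y < d \<longrightarrow> (\<forall>N. dist ((F ^^ N) y') ((F ^^ N) y) < e))}"

definition is_fatou_component :: "('a::metric_space \<Rightarrow> 'a) \<Rightarrow> 'a set \<Rightarrow> bool" where
  "is_fatou_component F S \<longleftrightarrow> S \<in> components (fatou_set F)"

end

theory Submission
  imports Defs
begin


declare cf_rem.simps(2)[simp del]

context fixes \<theta> :: real assumes irr: "\<theta> \<notin> \<rat>" begin

lemma rem_irr: "cf_rem \<theta> n \<notin> \<rat>"
proof (induction n)
  case 0 then show ?case using irr by simp
next
  case (Suc n)
  show ?case
  proof
    assume h: "cf_rem \<theta> (Suc n) \<in> \<rat>"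
    have "cf_rem \<theta> n = of_int \<lfloor>cf_rem \<theta> n\<rfloor> + 1 / cf_rem \<theta> (Suc n)"
      by (simp add: cf_rem.simps)
    moreover have "of_int \<lfloor>cf_rem \<theta> n\<rfloor> + 1 / cf_rem \<theta> (Suc n) \<in> \<rat>"
      using h by (intro Rats_add Rats_divide) auto
    ultimately show False using Suc by simp
  qed
qed

lemma frac_pos: "cf_rem \<theta> n - of_int (cf_a \<theta> n) > 0"
proof -
  have "cf_rem \<theta> n \<noteq> of_int (cf_a \<theta> n)" using rem_irr[of n] by (metis Rats_of_int)
  then show ?thesis unfolding cf_a_def using of_int_floor_le[of "cf_rem \<theta> n"] by linarith
qed

lemma frac_lt1: "cf_rem \<theta> n - of_int (cf_a \<theta> n) < 1"
  unfolding cf_a_def by linarith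

lemma rem_Suc: "cf_rem \<theta> (Suc n) = 1 / (cf_rem \<theta> n - of_int (cf_a \<theta> n))"
  by (simp add: cf_a_def cf_rem.simps)

lemma rem_gt1: "cf_rem \<theta> (Suc n) > 1"
  using frac_pos[of n] frac_lt1[of n] unfolding rem_Suc by (simp add: field_simps)

lemma a_pos: "n \<ge> 1 \<Longrightarrow> cf_a \<theta> n \<ge> 1"
  using rem_gt1[of "n-1"] unfolding cf_a_def by (cases n) auto

lemma rem_eq: "cf_rem \<theta> n = of_int (cf_a \<theta> n) + 1 / cf_rem \<theta> (Suc n)"
  using frac_pos[of n] unfolding rem_Suc by simp

lemma q_props: "cf_q \<theta> n \<ge> 1 \<and> cf_q \<theta> (Suc n) \<ge> cf_q \<theta> n \<and> cf_q \<theta> n \<ge> int n"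
proof (induction n rule: nat_less_induct)
  case (1 n)
  show ?case
  proof (cases n)
    case 0 then show ?thesis using a_pos[of 1] by simp
  next
    case (Suc m)
    note IH = 1[rule_format]
    show ?thesis
    proof (cases m)
      case 0
      have a1: "cf_a \<theta> (Suc 0) \<ge> 1" "cf_a \<theta> (Suc (Suc 0)) \<ge> 1" using a_pos[of 1] a_pos[of 2] by (auto simp: numeral_2_eq_2)
      have "cf_a \<theta> (Suc (Suc 0)) * cf_a \<theta> (Suc 0) \<ge> cf_a \<theta> (Suc 0)" using a1 by (simp add: mult_le_cancel_right1)
      moreover have "cf_q \<theta> (Suc 0) = cf_a \<theta> (Suc 0)" "cf_q \<theta> (Suc (Suc 0)) = cf_a \<theta> (Suc (Suc 0)) * cf_a \<theta> (Suc 0) + 1" by simp_all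
      ultimately have "1 \<le> cf_q \<theta> (Suc 0)" "cf_q \<theta> (Suc 0) \<le> cf_q \<theta> (Suc (Suc 0))" "int (Suc 0) \<le> cf_q \<theta> (Suc 0)"
        using a1 by linarith+
      then show ?thesis using Suc 0 by simp
    next
      case (Suc l)
      have h1: "cf_q \<theta> l \<ge> 1" "cf_q \<theta> m \<ge> 1" "cf_q \<theta> m \<ge> cf_q \<theta> l" "cf_q \<theta> l \<ge> int l" "cf_q \<theta> m \<ge> int m"
        using IH[of l] IH[of m] Suc \<open>n = Suc m\<close> by auto
      have e1: "cf_q \<theta> n = cf_a \<theta> n * cf_q \<theta> m + cf_q \<theta> l"
        using Suc \<open>n = Suc m\<close> by simp
      have e2: "cf_q \<theta> (Suc n) = cf_a \<theta> (Suc n) * cf_q \<theta> n + cf_q \<theta> m"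
        using Suc \<open>n = Suc m\<close> by simp
      have an: "cf_a \<theta> n \<ge> 1" "cf_a \<theta> (Suc n) \<ge> 1" using a_pos \<open>n = Suc m\<close> by auto
      have "cf_a \<theta> n * cf_q \<theta> m \<ge> cf_q \<theta> m" using an h1 by (simp add: mult_le_cancel_right1)
      then have q1: "cf_q \<theta> n \<ge> cf_q \<theta> m + 1" using e1 h1 by linarith
      have "cf_a \<theta> (Suc n) * cf_q \<theta> n \<ge> cf_q \<theta> n" using an q1 h1 by (simp add: mult_le_cancel_right1)
      then show ?thesis using e2 q1 h1 \<open>n = Suc m\<close> by linarith
    qed
  qed
qed

lemma q_mono: "m \<le> n \<Longrightarrow> cf_q \<theta> m \<le> cf_q \<theta> n"
  by (induction n rule: dec_induct) (use q_props order_trans in blast)+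

definition P :: "nat \<Rightarrow> real" where "P k = (\<Prod>i\<in>{1..k}. 1 / cf_rem \<theta> i)"

lemma P_Suc: "P (Suc k) = P k / cf_rem \<theta> (Suc k)"
  unfolding P_def by (simp add: prod.nat_ivl_Suc' divide_inverse mult.commute)

lemma P_pos: "P k > 0"
proof -
  have "cf_rem \<theta> i > 0" if "i \<in> {1..k}" for i
  proof -
    have "i = Suc (i - 1)" using that by auto
    then show ?thesis using rem_gt1[of "i - 1"] by (metis less_trans zero_less_one)
  qed
  then show ?thesis unfolding P_def by (intro prod_pos) auto
qed


lemma rem_pos: "cf_rem \<theta> (Suc n) > 0" using rem_gt1[of n] by linarith

lemma rem_mul: "cf_rem \<theta> n * cf_rem \<theta> (Suc n) = of_int (cf_a \<theta> n) * cf_rem \<theta> (Suc n) + 1"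
proof -
  have "cf_rem \<theta> n * cf_rem \<theta> (Suc n) = (of_int (cf_a \<theta> n) + 1 / cf_rem \<theta> (Suc n)) * cf_rem \<theta> (Suc n)"
    using rem_eq[of n] by simp
  also have "\<dots> = of_int (cf_a \<theta> n) * cf_rem \<theta> (Suc n) + 1" using rem_pos[of n] by (simp add: field_simps)
  finally show ?thesis .
qed

lemma P_inv: "1 / P (Suc (Suc n)) = of_int (cf_q \<theta> (Suc n)) * cf_rem \<theta> (Suc (Suc n)) + of_int (cf_q \<theta> n)"
proof (induction n)
  case 0
  have "1 / P (Suc (Suc 0)) = cf_rem \<theta> 1 * cf_rem \<theta> 2"
    unfolding P_def by (simp add: numeral_2_eq_2)
  also have "\<dots> = of_int (cf_a \<theta> 1) * cf_rem \<theta> 2 + 1" using rem_mul[of 1] by (simp add: numeral_2_eq_2)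
  finally show ?case by (simp add: numeral_2_eq_2)
next
  case (Suc n)
  have "1 / P (Suc (Suc (Suc n))) = cf_rem \<theta> (Suc (Suc (Suc n))) * (1 / P (Suc (Suc n)))"
    unfolding P_Suc[of "Suc (Suc n)"] using P_pos[of "Suc (Suc n)"] rem_pos[of "Suc (Suc n)"] by simp
  also have "\<dots> = cf_rem \<theta> (Suc (Suc (Suc n))) * (of_int (cf_q \<theta> (Suc n)) * cf_rem \<theta> (Suc (Suc n)) + of_int (cf_q \<theta> n))"
    using Suc by simp
  also have "\<dots> = of_int (cf_q \<theta> (Suc n)) * (cf_rem \<theta> (Suc (Suc n)) * cf_rem \<theta> (Suc (Suc (Suc n)))) + of_int (cf_q \<theta> n) * cf_rem \<theta> (Suc (Suc (Suc n)))"
    by (simp add: algebra_simps)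
  also have "\<dots> = of_int (cf_q \<theta> (Suc n)) * (of_int (cf_a \<theta> (Suc (Suc n))) * cf_rem \<theta> (Suc (Suc (Suc n))) + 1) + of_int (cf_q \<theta> n) * cf_rem \<theta> (Suc (Suc (Suc n)))"
    using rem_mul[of "Suc (Suc n)"] by simp
  also have "\<dots> = of_int (cf_q \<theta> (Suc (Suc n))) * cf_rem \<theta> (Suc (Suc (Suc n))) + of_int (cf_q \<theta> (Suc n))"
    by (simp add: algebra_simps)
  finally show ?case .
qed

lemma P_bounds: "of_int (cf_q \<theta> (Suc (Suc n))) < 1 / P (Suc (Suc n))"
   "1 / P (Suc (Suc n)) < 2 * of_int (cf_q \<theta> (Suc (Suc n)))"
proof -
  let ?r = "cf_rem \<theta> (Suc (Suc n))" and ?a = "cf_a \<theta> (Suc (Suc n))"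
  have r1: "?r > of_int ?a" "?r < of_int ?a + 1" using frac_pos[of "Suc (Suc n)"] frac_lt1[of "Suc (Suc n)"] by linarith+
  have q: "cf_q \<theta> (Suc n) \<ge> 1" "cf_q \<theta> n \<ge> 1" "cf_q \<theta> (Suc (Suc n)) \<ge> cf_q \<theta> (Suc n)" using q_props by blast+
  have e: "of_int (cf_q \<theta> (Suc (Suc n))) = of_int ?a * of_int (cf_q \<theta> (Suc n)) + (of_int (cf_q \<theta> n) :: real)" by simp
  have qr: "of_int (cf_q \<theta> (Suc n)) > (0::real)" using q by simp
  have "of_int ?a * of_int (cf_q \<theta> (Suc n)) < ?r * (of_int (cf_q \<theta> (Suc n)) :: real)"
    using r1 qr by (intro mult_strict_right_mono) auto
  then show "of_int (cf_q \<theta> (Suc (Suc n))) < 1 / P (Suc (Suc n))"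
    unfolding P_inv using e by (simp add: algebra_simps)
  have "?r * (of_int (cf_q \<theta> (Suc n)) :: real) < (of_int ?a + 1) * of_int (cf_q \<theta> (Suc n))"
    using r1 qr by (intro mult_strict_right_mono) auto
  moreover have "(of_int (cf_q \<theta> (Suc n)) :: real) \<le> of_int (cf_q \<theta> (Suc (Suc n)))" by (metis q(3) of_int_le_iff)
  ultimately show "1 / P (Suc (Suc n)) < 2 * of_int (cf_q \<theta> (Suc (Suc n)))"
    unfolding P_inv using e by (simp add: algebra_simps)
qed

lemma D_exists2: "(\<exists>p::int. of_int (cf_q \<theta> n) * \<theta> - of_int p = (-1) ^ n * P (Suc n)) \<and>
   (\<exists>p::int. of_int (cf_q \<theta> (Suc n)) * \<theta> - of_int p = (-1) ^ (Suc n) * P (Suc (Suc n)))"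
proof (induction n)
  case 0
  have r0: "cf_rem \<theta> 0 = \<theta>" by simp
  have e0: "\<theta> = of_int (cf_a \<theta> 0) + 1 / cf_rem \<theta> 1" using rem_eq[of 0] by simp
  have e1: "cf_rem \<theta> 1 = of_int (cf_a \<theta> 1) + 1 / cf_rem \<theta> 2" using rem_eq[of 1] by (simp add: numeral_2_eq_2)
  have p1: "P 1 = 1 / cf_rem \<theta> 1" unfolding P_def by simp
  have p2: "P 2 = 1 / cf_rem \<theta> 1 / cf_rem \<theta> 2" using P_Suc[of 1] p1 by (simp add: numeral_2_eq_2)
  have pos: "cf_rem \<theta> 1 > 0" "cf_rem \<theta> 2 > 0" using rem_pos[of 0] rem_pos[of 1] by (auto simp: numeral_2_eq_2)
  have A: "of_int (cf_q \<theta> 0) * \<theta> - of_int (cf_a \<theta> 0) = (-1) ^ 0 * P (Suc 0)"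
    using e0 p1 by simp
  have "of_int (cf_a \<theta> 1) * \<theta> - of_int (cf_a \<theta> 1 * cf_a \<theta> 0 + 1) = of_int (cf_a \<theta> 1) / cf_rem \<theta> 1 - 1"
    by (subst e0) (simp add: algebra_simps)
  also have "\<dots> = (of_int (cf_a \<theta> 1) - cf_rem \<theta> 1) / cf_rem \<theta> 1" using pos by (simp add: field_simps)
  also have "\<dots> = - P 2"
  proof -
    have "of_int (cf_a \<theta> 1) - cf_rem \<theta> 1 = - (1 / cf_rem \<theta> 2)" using e1 by simp
    then show ?thesis unfolding p2 using pos by (simp add: field_simps) (metis distrib_left mult.right_neutral)
  qed
  finally have B: "of_int (cf_q \<theta> (Suc 0)) * \<theta> - of_int (cf_a \<theta> 1 * cf_a \<theta> 0 + 1) = (-1) ^ Suc 0 * P (Suc (Suc 0))"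
    by (simp add: numeral_2_eq_2)
  show ?case using A B by blast
next
  case (Suc n)
  obtain p1 where h1: "of_int (cf_q \<theta> n) * \<theta> - of_int p1 = (-1) ^ n * P (Suc n)" using Suc by blast
  obtain p2 where h2: "of_int (cf_q \<theta> (Suc n)) * \<theta> - of_int p2 = (-1) ^ (Suc n) * P (Suc (Suc n))" using Suc by blast
  let ?a = "cf_a \<theta> (Suc (Suc n))" and ?r = "cf_rem \<theta> (Suc (Suc n))" and ?r' = "cf_rem \<theta> (Suc (Suc (Suc n)))"
  have rpos: "?r > 0" "?r' > 0" using rem_pos by blast+
  have er: "?r - of_int ?a = 1 / ?r'" using rem_eq[of "Suc (Suc n)"] by simp
  have "of_int (cf_q \<theta> (Suc (Suc n))) * \<theta> - of_int (?a * p2 + p1)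
      = of_int ?a * (of_int (cf_q \<theta> (Suc n)) * \<theta> - of_int p2) + (of_int (cf_q \<theta> n) * \<theta> - of_int p1)"
    by (simp add: algebra_simps)
  also have "\<dots> = (-1) ^ n * (P (Suc n) - of_int ?a * P (Suc (Suc n)))"
    unfolding h1 h2 by (simp add: algebra_simps)
  also have "P (Suc n) - of_int ?a * P (Suc (Suc n)) = P (Suc n) * (?r - of_int ?a) / ?r"
    unfolding P_Suc[of "Suc n"] using rpos by (simp add: field_simps)
  also have "\<dots> = P (Suc (Suc (Suc n)))"
    unfolding er P_Suc by (simp add: field_simps)
  finally show ?case using h2 by (metis power_Suc2 mult.commute mult_minus1 minus_minus power_Suc)
qed

lemma D_exists: "\<exists>p::int. of_int (cf_q \<theta> n) * \<theta> - of_int p = (-1) ^ n * P (Suc n)"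
  using D_exists2 by blast

end


definition ee :: "real \<Rightarrow> complex" where "ee t = exp (2 * pi * \<i> * of_real t)"

lemma ee_norm: "norm (1 - ee t) = 2 * \<bar>sin (pi * t)\<bar>"
proof -
  have "ee t = exp (\<i> * of_real (2 * pi * t))" unfolding ee_def by (simp add: algebra_simps)
  then show ?thesis using dist_exp_i_1[of "2 * pi * t"] by (simp add: norm_minus_commute)
qed

lemma ee_le: "norm (1 - ee t) \<le> 2 * pi * \<bar>t\<bar>"
  unfolding ee_norm using abs_sin_x_le_abs_x[of "pi * t"] by (simp add: abs_mult)

lemma ee_ge: assumes "1/4 \<le> \<bar>t\<bar>" "\<bar>t\<bar> \<le> 1/2" shows "norm (1 - ee t) \<ge> 1"
proof -
  have "sin (pi * \<bar>t\<bar>) \<ge> 0" using assms by (intro sin_ge_zero) auto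
  moreover have "\<bar>sin (pi * t)\<bar> = \<bar>sin (pi * \<bar>t\<bar>)\<bar>"
    by (cases "t \<ge> 0") (auto simp: sin_minus)
  ultimately have "\<bar>sin (pi * t)\<bar> = sin (pi * \<bar>t\<bar>)" by simp
  moreover have "sin (pi / 6) \<le> sin (pi * \<bar>t\<bar>)"
    using assms by (intro sin_monotone_2pi_le) (auto simp: field_simps)
  ultimately show ?thesis unfolding ee_norm sin_30 by simp
qed

lemma ee_int: "ee (of_int p + t) = ee t"
proof -
  have "ee (of_int p + t) = exp (2 * pi * \<i> * of_real (of_int p)) * ee t"
    unfolding ee_def of_real_add distrib_left exp_add by simp
  also have "2 * pi * \<i> * of_real (of_int p) = 2 * of_int p * pi * \<i>" by simp
  also have "exp (2 * of_int p * pi * \<i>) = 1" by (rule exp_integer_2pi) simp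
  finally show ?thesis by simp
qed

lemma lam_pow: "exp (2 * pi * \<i> * of_real \<theta>) ^ m = ee (real m * \<theta>)"
  unfolding ee_def exp_of_nat_mult[symmetric] by (simp add: algebra_simps)

lemma norm_lam: "norm (exp (2 * pi * \<i> * of_real \<theta>)) = 1"
  by (simp add: norm_exp)

definition qsf :: "real \<Rightarrow> (nat \<Rightarrow> nat) \<Rightarrow> nat \<Rightarrow> nat" where
  "qsf \<theta> k n = nat (cf_q \<theta> (k n))"

definition dd :: "real \<Rightarrow> (nat \<Rightarrow> nat) \<Rightarrow> nat \<Rightarrow> real" where
  "dd \<theta> k j = (-1) ^ (k j) * P \<theta> (Suc (k j))"

locale sett = fixes \<theta> :: real and k :: "nat \<Rightarrow> nat"
  assumes irr: "\<theta> \<notin> \<rat>"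
    and growth: "filterlim (\<lambda>n. ln (real_of_int (cf_q \<theta> (Suc n))) / real_of_int (cf_q \<theta> n)) at_top sequentially"
    and sm: "strict_mono k"
begin

lemma qs_real: "real (qsf \<theta> k j) = of_int (cf_q \<theta> (k j))"
  unfolding qsf_def using q_props[OF irr, of "k j"] by simp

lemma qs_ge: "qsf \<theta> k j \<ge> j" "qsf \<theta> k j \<ge> 1"
proof -
  have "int j \<le> int (k j)" using seq_suble[OF sm] by simp
  then show "qsf \<theta> k j \<ge> j" unfolding qsf_def using q_props[OF irr, of "k j"] by linarith
  show "qsf \<theta> k j \<ge> 1" unfolding qsf_def using q_props[OF irr, of "k j"] by linarith
qed

lemma qs_mono: "i \<le> j \<Longrightarrow> qsf \<theta> k i \<le> qsf \<theta> k j"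
  unfolding qsf_def using q_mono[OF irr] strict_mono_mono[OF sm] by (simp add: monoD nat_mono)

lemma lam_qs: "exp (2 * pi * \<i> * of_real \<theta>) ^ (N * qsf \<theta> k j) = ee (real N * dd \<theta> k j)"
proof -
  obtain p where p: "of_int (cf_q \<theta> (k j)) * \<theta> - of_int p = (-1) ^ (k j) * P \<theta> (Suc (k j))"
    using D_exists[OF irr] by blast
  have p': "\<theta> * of_int (cf_q \<theta> (k j)) = of_int p + dd \<theta> k j" using p unfolding dd_def by (simp add: algebra_simps)
  have "real (N * qsf \<theta> k j) * \<theta> = real N * (\<theta> * of_int (cf_q \<theta> (k j)))"
    by (simp add: qs_real)
  also have "\<dots> = of_int (int N * p) + real N * dd \<theta> k j" unfolding p' by (simp add: algebra_simps)
  finally have "real (N * qsf \<theta> k j) * \<theta> = of_int (int N * p) + real N * dd \<theta> k j" .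
  then show ?thesis unfolding lam_pow using ee_int[of "int N * p"] by simp
qed

lemma abs_dd: "\<bar>dd \<theta> k j\<bar> = P \<theta> (Suc (k j))"
  unfolding dd_def using P_pos[OF irr] by (simp add: abs_mult less_imp_le)

lemma dd_bounds: assumes "j \<ge> 1"
  shows "\<bar>dd \<theta> k j\<bar> < 1 / of_int (cf_q \<theta> (Suc (k j)))" "\<bar>dd \<theta> k j\<bar> > 1 / (2 * of_int (cf_q \<theta> (Suc (k j))))"
proof -
  have "k j \<ge> 1" using seq_suble[OF sm, of j] assms by simp
  then obtain n where n: "k j = Suc n" by (cases "k j") auto
  have pp: "P \<theta> (Suc (Suc n)) > 0" using P_pos[OF irr] by blast
  have qq: "of_int (cf_q \<theta> (Suc (Suc n))) > (0::real)" using q_props[OF irr, of "Suc (Suc n)"] by (simp del: cf_q.simps)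
  show "\<bar>dd \<theta> k j\<bar> < 1 / of_int (cf_q \<theta> (Suc (k j)))"
    using P_bounds(1)[OF irr, of n] pp qq unfolding abs_dd n by (simp add: field_simps)
  show "\<bar>dd \<theta> k j\<bar> > 1 / (2 * of_int (cf_q \<theta> (Suc (k j))))"
    using P_bounds(2)[OF irr, of n] pp qq unfolding abs_dd n by (simp add: field_simps)
qed


lemma growth_C: fixes C :: real shows "\<exists>n0. \<forall>n\<ge>n0. of_int (cf_q \<theta> (Suc n)) \<ge> exp (C * of_int (cf_q \<theta> n))"
proof -
  have "eventually (\<lambda>n. C \<le> ln (real_of_int (cf_q \<theta> (Suc n))) / real_of_int (cf_q \<theta> n)) sequentially"
    using growth unfolding filterlim_at_top by blast
  then obtain n0 where n0: "\<And>n. n \<ge> n0 \<Longrightarrow> C \<le> ln (real_of_int (cf_q \<theta> (Suc n))) / real_of_int (cf_q \<theta> n)"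
    unfolding eventually_sequentially by blast
  have "of_int (cf_q \<theta> (Suc n)) \<ge> exp (C * of_int (cf_q \<theta> n))" if "n \<ge> n0" for n
  proof -
    have q0: "real_of_int (cf_q \<theta> n) > 0" "real_of_int (cf_q \<theta> (Suc n)) > 0"
      using q_props[OF irr, of n] q_props[OF irr, of "Suc n"] by (simp_all del: cf_q.simps)
    have "C * of_int (cf_q \<theta> n) \<le> ln (real_of_int (cf_q \<theta> (Suc n)))"
      using n0[OF that] q0 by (simp add: field_simps)
    then have "exp (C * of_int (cf_q \<theta> n)) \<le> exp (ln (real_of_int (cf_q \<theta> (Suc n))))" by simp
    then show ?thesis using q0 by simp
  qed
  then show ?thesis by blast
qed

lemma pow_exp: "\<rho> > 0 \<Longrightarrow> \<rho> ^ n = exp (real n * ln \<rho>)"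
  by (simp add: exp_of_nat_mult)

lemma tailb: assumes "\<rho> \<ge> 1"
  shows "\<exists>J. \<forall>j\<ge>J. \<rho> ^ (qsf \<theta> k j) * real (qsf \<theta> k j) / of_int (cf_q \<theta> (Suc (k j))) \<le> exp (- real j)"
proof -
  obtain n0 where n0: "\<And>n. n \<ge> n0 \<Longrightarrow> of_int (cf_q \<theta> (Suc n)) \<ge> exp ((ln \<rho> + 2) * of_int (cf_q \<theta> n))"
    using growth_C by blast
  have "\<rho> ^ (qsf \<theta> k j) * real (qsf \<theta> k j) / of_int (cf_q \<theta> (Suc (k j))) \<le> exp (- real j)" if "j \<ge> n0" for j
  proof -
    define Q where "Q = real (qsf \<theta> k j)"
    have Qq: "Q = of_int (cf_q \<theta> (k j))" unfolding Q_def by (rule qs_real)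
    have Qj: "Q \<ge> real j" "Q \<ge> 1" unfolding Q_def using qs_ge by auto
    have "k j \<ge> n0" using seq_suble[OF sm, of j] that by simp
    then have big: "of_int (cf_q \<theta> (Suc (k j))) \<ge> exp ((ln \<rho> + 2) * Q)" using n0 Qq by simp
    have rq: "\<rho> ^ (qsf \<theta> k j) = exp (Q * ln \<rho>)" unfolding Q_def using assms pow_exp by simp
    have e: "exp ((ln \<rho> + 2) * Q) = exp (Q * ln \<rho>) * exp (2 * Q)" by (simp add: algebra_simps exp_add[symmetric])
    have pos: "exp (Q * ln \<rho>) > 0" "exp (2 * Q) > 0" by auto
    have "\<rho> ^ (qsf \<theta> k j) * Q / of_int (cf_q \<theta> (Suc (k j))) \<le> exp (Q * ln \<rho>) * Q / (exp (Q * ln \<rho>) * exp (2 * Q))"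
      unfolding rq using big e pos Qj q_props[OF irr, of "Suc (k j)"] by (intro divide_left_mono) (auto intro!: mult_pos_pos simp del: cf_q.simps)
    also have "\<dots> = Q / exp (2 * Q)" using pos by simp
    also have "\<dots> = Q * exp (- Q) * exp (- Q)" by (simp add: exp_minus exp_add[symmetric] field_simps)
    also have "\<dots> \<le> 1 * exp (- Q)"
    proof -
      have "1 + Q \<le> exp Q" by (rule exp_ge_add_one_self)
      then have "Q \<le> exp Q" by linarith
      then have "Q * exp (- Q) \<le> 1" by (simp add: exp_minus field_simps)
      then show ?thesis by (intro mult_right_mono) auto
    qed
    also have "\<dots> \<le> exp (- real j)" using Qj by simp
    finally show ?thesis unfolding Q_def .
  qed
  then show ?thesis by blast
qed

lemma summable_exp_neg: "summable (\<lambda>j::nat. exp (- real j))"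
proof -
  have "exp (- real j) = exp (-1) ^ j" for j
    using exp_of_nat_mult[of j "-1::real"] by simp
  then show ?thesis by (simp add: summable_geometric)
qed

lemma SUM: assumes "\<rho> \<ge> 0" "B \<ge> 0"
  shows "summable (\<lambda>j. B * \<rho> ^ (qsf \<theta> k j) * norm (1 - ee (real N * dd \<theta> k j)))"
proof -
  define \<rho>' where "\<rho>' = max 1 \<rho>"
  have r1: "\<rho>' \<ge> 1" "\<rho> \<le> \<rho>'" unfolding \<rho>'_def by auto
  obtain J where J: "\<And>j. j \<ge> J \<Longrightarrow> \<rho>' ^ (qsf \<theta> k j) * real (qsf \<theta> k j) / of_int (cf_q \<theta> (Suc (k j))) \<le> exp (- real j)"
    using tailb[OF r1(1)] by blast
  show ?thesis
  proof (rule summable_comparison_test')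
    show "summable (\<lambda>j. B * (2 * pi * real N) * exp (- real j))"
      by (intro summable_mult summable_exp_neg)
    fix j assume j: "j \<ge> max J 1"
    let ?q = "of_int (cf_q \<theta> (Suc (k j))) :: real"
    have qpos: "?q > 0" using q_props[OF irr, of "Suc (k j)"] by (simp del: cf_q.simps)
    have n1: "norm (1 - ee (real N * dd \<theta> k j)) \<le> 2 * pi * real N * (1 / ?q)"
    proof -
      have "norm (1 - ee (real N * dd \<theta> k j)) \<le> 2 * pi * (real N * \<bar>dd \<theta> k j\<bar>)"
        using ee_le[of "real N * dd \<theta> k j"] by (simp add: abs_mult)
      also have "\<dots> \<le> 2 * pi * (real N * (1 / ?q))"
        using dd_bounds(1)[of j] j by (intro mult_left_mono) auto
      finally show ?thesis by simp
    qed
    have Q1: "real (qsf \<theta> k j) \<ge> 1" using qs_ge by simp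
    have "\<rho> ^ (qsf \<theta> k j) \<le> \<rho>' ^ (qsf \<theta> k j)" using r1 assms by (intro power_mono) auto
    also have "\<dots> \<le> \<rho>' ^ (qsf \<theta> k j) * real (qsf \<theta> k j)" using Q1 r1 by simp
    finally have "\<rho> ^ (qsf \<theta> k j) \<le> \<rho>' ^ (qsf \<theta> k j) * real (qsf \<theta> k j)" .
    then have "\<rho> ^ (qsf \<theta> k j) / ?q \<le> \<rho>' ^ (qsf \<theta> k j) * real (qsf \<theta> k j) / ?q"
      using qpos by (intro divide_right_mono) auto
    then have r2: "\<rho> ^ (qsf \<theta> k j) / ?q \<le> exp (- real j)"
      using J[of j] j by linarith
    have "norm (B * \<rho> ^ (qsf \<theta> k j) * norm (1 - ee (real N * dd \<theta> k j)))
       = B * \<rho> ^ (qsf \<theta> k j) * norm (1 - ee (real N * dd \<theta> k j))" using assms by simp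
    also have "\<dots> \<le> B * \<rho> ^ (qsf \<theta> k j) * (2 * pi * real N * (1 / ?q))"
      using n1 assms by (intro mult_left_mono) auto
    also have "\<dots> = B * (2 * pi * real N) * (\<rho> ^ (qsf \<theta> k j) / ?q)" by simp
    also have "\<dots> \<le> B * (2 * pi * real N) * exp (- real j)"
      using r2 assms by (intro mult_left_mono) auto
    finally show "norm (B * \<rho> ^ (qsf \<theta> k j) * norm (1 - ee (real N * dd \<theta> k j))) \<le> B * (2 * pi * real N) * exp (- real j)" .
  qed
qed


abbreviation "L \<equiv> exp (2 * pi * \<i> * of_real \<theta>)"

definition H :: "(nat \<Rightarrow> complex) \<Rightarrow> nat \<Rightarrow> complex \<Rightarrow> complex" where
  "H u N z = (\<Sum>j. u (qsf \<theta> k j) * z ^ (qsf \<theta> k j + 1) * (1 - L ^ (N * qsf \<theta> k j)))"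

lemma phi_exp: "exp (2 * pi * \<i> * of_nat q * of_real \<theta>) = L ^ q"
proof -
  have "2 * pi * \<i> * of_nat q * of_real \<theta> = of_nat q * (2 * pi * \<i> * of_real \<theta>)" by (simp add: algebra_simps)
  then show ?thesis by (metis exp_of_nat_mult)
qed

lemma norm_Lpow: "norm (L ^ n) = 1" by (simp add: norm_power norm_exp)

end

locale bnd = sett + fixes u :: "nat \<Rightarrow> complex" and B :: real assumes ub: "\<And>m. norm (u m) \<le> B"
begin

lemma B_nonneg: "B \<ge> 0" using ub[of 0] norm_ge_zero order_trans by blast

lemma S1: "summable (\<lambda>j. norm (u (qsf \<theta> k j) * z ^ (qsf \<theta> k j + 1) * (1 - L ^ (N * qsf \<theta> k j))))"
proof (rule summable_comparison_test')
  show "summable (\<lambda>j. (B * norm z) * norm z ^ (qsf \<theta> k j) * norm (1 - ee (real N * dd \<theta> k j)))"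
    using B_nonneg by (intro SUM) auto
  fix j :: nat
  have "norm (norm (u (qsf \<theta> k j) * z ^ (qsf \<theta> k j + 1) * (1 - L ^ (N * qsf \<theta> k j))))
      = norm (u (qsf \<theta> k j)) * (norm z * norm z ^ (qsf \<theta> k j)) * norm (1 - ee (real N * dd \<theta> k j))"
    unfolding lam_qs by (simp add: norm_mult norm_power)
  also have "\<dots> \<le> B * (norm z * norm z ^ (qsf \<theta> k j)) * norm (1 - ee (real N * dd \<theta> k j))"
    using ub by (intro mult_right_mono) auto
  finally show "norm (norm (u (qsf \<theta> k j) * z ^ (qsf \<theta> k j + 1) * (1 - L ^ (N * qsf \<theta> k j))))
      \<le> (B * norm z) * norm z ^ (qsf \<theta> k j) * norm (1 - ee (real N * dd \<theta> k j))" by (simp add: algebra_simps)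
qed

lemma S2: "summable (\<lambda>j. norm (u (qsf \<theta> k j) * (1 - L ^ (qsf \<theta> k j)) * c * z ^ (qsf \<theta> k j)))"
proof (rule summable_comparison_test')
  show "summable (\<lambda>j. (B * norm c) * norm z ^ (qsf \<theta> k j) * norm (1 - ee (real 1 * dd \<theta> k j)))"
    using B_nonneg by (intro SUM) auto
  fix j :: nat
  have "norm (norm (u (qsf \<theta> k j) * (1 - L ^ (qsf \<theta> k j)) * c * z ^ (qsf \<theta> k j)))
      = norm (u (qsf \<theta> k j)) * norm c * norm z ^ (qsf \<theta> k j) * norm (1 - ee (real 1 * dd \<theta> k j))"
    using lam_qs[of 1 j] by (simp add: norm_mult norm_power del: of_nat_1)
  also have "\<dots> \<le> B * norm c * norm z ^ (qsf \<theta> k j) * norm (1 - ee (real 1 * dd \<theta> k j))"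
    using ub by (intro mult_right_mono) auto
  finally show "norm (norm (u (qsf \<theta> k j) * (1 - L ^ (qsf \<theta> k j)) * c * z ^ (qsf \<theta> k j)))
      \<le> (B * norm c) * norm z ^ (qsf \<theta> k j) * norm (1 - ee (real 1 * dd \<theta> k j))" by (simp add: algebra_simps)
qed


end



context bnd begin

lemma iter: "(A_map \<theta> (qsf \<theta> k) u ^^ N) (w, z) = (L ^ N * (w + H u N z), L ^ N * z)"
proof (induction N)
  case 0
  then show ?case unfolding H_def by simp
next
  case (Suc N)
  let ?q = "qsf \<theta> k"
  define T1 where "T1 j = u (?q j) * z ^ (?q j + 1) * (1 - L ^ (N * ?q j))" for j
  define T2 where "T2 j = u (?q j) * (1 - L ^ (?q j)) * L ^ (N * ?q j) * z ^ (?q j + 1)" for j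
  have s1: "summable T1" unfolding T1_def by (rule summable_norm_cancel[OF S1])
  have s2: "summable T2"
  proof -
    have "T2 = (\<lambda>j. u (?q j) * (1 - L ^ (?q j)) * z * (L ^ N * z) ^ (?q j))"
      unfolding T2_def by (auto simp: algebra_simps power_mult power_mult_distrib)
    then show ?thesis using summable_norm_cancel[OF S2[of z "L ^ N * z"]] by simp
  qed
  have s3: "summable (\<lambda>j. u (?q j) * (1 - L ^ (?q j)) * (L ^ N * z) ^ (?q j))"
    using summable_norm_cancel[OF S2[of 1 "L ^ N * z"]] by simp
  have "phi \<theta> ?q u (L ^ N * z) = L ^ N * z * L * (\<Sum>j. u (?q j) * (1 - L ^ (?q j)) * (L ^ N * z) ^ (?q j))"
    unfolding phi_def phi_exp by simp
  also have "\<dots> = L ^ Suc N * (\<Sum>j. z * (u (?q j) * (1 - L ^ (?q j)) * (L ^ N * z) ^ (?q j)))"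
    using suminf_mult[OF s3, of z] by (simp add: algebra_simps)
  also have "(\<lambda>j. z * (u (?q j) * (1 - L ^ (?q j)) * (L ^ N * z) ^ (?q j))) = T2"
    unfolding T2_def by (auto simp: algebra_simps power_mult power_mult_distrib)
  finally have ph: "phi \<theta> ?q u (L ^ N * z) = L ^ Suc N * suminf T2" .
  have HS: "H u (Suc N) z = suminf T1 + suminf T2"
  proof -
    have "suminf T1 + suminf T2 = (\<Sum>j. T1 j + T2 j)" using suminf_add[OF s1 s2] .
    also have "(\<lambda>j. T1 j + T2 j) = (\<lambda>j. u (?q j) * z ^ (?q j + 1) * (1 - L ^ (Suc N * ?q j)))"
      unfolding T1_def T2_def by (auto simp: algebra_simps power_add)
    finally show ?thesis unfolding H_def by simp
  qed
  have "(A_map \<theta> ?q u ^^ Suc N) (w, z) = A_map \<theta> ?q u (L ^ N * (w + H u N z), L ^ N * z)"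
    using Suc by simp
  also have "\<dots> = (L * (L ^ N * (w + suminf T1)) + L ^ Suc N * suminf T2, L * (L ^ N * z))"
    unfolding A_map_def H_def T1_def using ph by simp
  also have "\<dots> = (L ^ Suc N * (w + H u (Suc N) z), L ^ Suc N * z)"
    unfolding HS by (simp add: algebra_simps)
  finally show ?case .
qed

end


context bnd begin

lemma ee_le2: "norm (1 - ee t) \<le> 2"
  unfolding ee_norm using abs_sin_le_one[of "pi * t"] by simp

lemma term_norm: "norm (u (qsf \<theta> k j) * z ^ (qsf \<theta> k j + 1) * (1 - L ^ (N * qsf \<theta> k j)))
   = norm (u (qsf \<theta> k j)) * (norm z * norm z ^ (qsf \<theta> k j)) * norm (1 - ee (real N * dd \<theta> k j))"
  unfolding lam_qs by (simp add: norm_mult norm_power)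

lemma nat_ceil_ge: "y \<le> real (nat \<lceil>y\<rceil>)"
proof (cases "y < 0")
  case True then show ?thesis by (smt (verit) of_nat_0_le_iff)
next
  case False then have "real (nat \<lceil>y\<rceil>) = of_int \<lceil>y\<rceil>" by simp
  then show ?thesis by simp
qed

lemma nat_ceil_lt: "y \<ge> 0 \<Longrightarrow> real (nat \<lceil>y\<rceil>) < y + 1"
proof -
  assume "y \<ge> 0"
  then have "real (nat \<lceil>y\<rceil>) = of_int \<lceil>y\<rceil>" by simp
  then show ?thesis using ceiling_correct[of y] by linarith
qed

lemma H_big:
  assumes z: "norm z > 1" and r: "r > 0" and lb: "\<And>j. r \<le> norm (u (qsf \<theta> k j))"
  shows "\<exists>N. norm (H u N z) \<ge> K"
proof -
  define \<rho> where "\<rho> = norm z"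
  have \<rho>1: "\<rho> > 1" unfolding \<rho>_def using z .
  have B0: "B \<ge> 0" by (rule B_nonneg)
  define q' where "q' j = (of_int (cf_q \<theta> (Suc (k j))) :: real)" for j
  define T where "T N j = u (qsf \<theta> k j) * z ^ (qsf \<theta> k j + 1) * (1 - L ^ (N * qsf \<theta> k j))" for N j
  have HT: "H u N z = suminf (T N)" for N unfolding H_def T_def ..
  have Tn: "norm (T N j) = norm (u (qsf \<theta> k j)) * (\<rho> * \<rho> ^ (qsf \<theta> k j)) * norm (1 - ee (real N * dd \<theta> k j))" for N j
    unfolding T_def \<rho>_def by (rule term_norm)
  obtain J1 where J1: "\<And>j. j \<ge> J1 \<Longrightarrow> \<rho> ^ qsf \<theta> k j * real (qsf \<theta> k j) / q' j \<le> exp (- real j)"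
    using tailb[of \<rho>] \<rho>1 unfolding q'_def by auto
  obtain n1 where n1: "\<And>n. n \<ge> n1 \<Longrightarrow> of_int (cf_q \<theta> (Suc n)) \<ge> exp ((3::real) * of_int (cf_q \<theta> n))"
    using growth_C by blast
  define S where "S = (\<Sum>j. exp (- real j))"
  have S0: "S \<ge> 0" unfolding S_def by (intro suminf_nonneg summable_exp_neg) auto
  define C1 where "C1 = 2 * pi * B * \<rho> * S"
  have C10: "C1 \<ge> 0" unfolding C1_def using B0 S0 \<rho>1 by simp
  define c where "c = min 1 (\<rho> - 1)"
  have c0: "c > 0" "c \<le> 1" "c \<le> \<rho> - 1" unfolding c_def using \<rho>1 by auto
  define K' where "K' = max 0 K"
  define X0 where "X0 = (K' + C1 + 2 * B * \<rho> / c) / (r * \<rho>)"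
  obtain n2 :: nat where n2: "X0 / (\<rho> - 1) \<le> real n2" using real_arch_simple by blast
  define M where "M = J1 + n1 + 3 + n2"
  have M1: "M \<ge> J1" "M \<ge> n1" "M \<ge> 3" "real M \<ge> X0 / (\<rho> - 1)" unfolding M_def using n2 by auto
  define m where "m = Suc M"
  define Q' where "Q' = qsf \<theta> k M"
  define Q where "Q = qsf \<theta> k m"
  define X where "X = \<rho> ^ Q'"
  have X1: "X \<ge> 1" unfolding X_def using \<rho>1 by simp
  define \<delta> where "\<delta> = \<bar>dd \<theta> k m\<bar>"
  define N where "N = nat \<lceil>1 / (4 * \<delta>)\<rceil>"
  have m1: "m \<ge> 1" "m \<ge> 4" unfolding m_def using M1 by auto
  have km: "k m \<ge> m" by (rule seq_suble[OF sm])
  have q'm: "q' m \<ge> 4"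
  proof -
    have "cf_q \<theta> (Suc (k m)) \<ge> int (Suc (k m))" using q_props[OF irr, of "Suc (k m)"] by blast
    then show ?thesis unfolding q'_def using km m1 by linarith
  qed
  have dlt: "\<delta> < 1 / q' m" "\<delta> > 1 / (2 * q' m)" unfolding \<delta>_def q'_def using dd_bounds m1 by auto
  have d0: "\<delta> > 0" using dlt q'm by (smt (verit) divide_pos_pos)
  have d4: "\<delta> \<le> 1/4"
  proof -
    have "1 / q' m \<le> 1 / 4" using q'm by (intro divide_left_mono) auto
    then show ?thesis using dlt by linarith
  qed
  have N1: "real N \<ge> 1 / (4 * \<delta>)" unfolding N_def by (rule nat_ceil_ge)
  have N2: "real N < 1 / (4 * \<delta>) + 1" unfolding N_def using d0 by (intro nat_ceil_lt) simp
  have Nd1: "real N * \<delta> \<ge> 1/4" using N1 d0 by (simp add: field_simps)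
  have Nd2: "real N * \<delta> \<le> 1/2"
  proof -
    have "real N * \<delta> < (1 / (4 * \<delta>) + 1) * \<delta>" using N2 d0 by (intro mult_strict_right_mono) auto
    also have "\<dots> = 1/4 + \<delta>" using d0 by (simp add: field_simps)
    finally show ?thesis using d4 by linarith
  qed
  have Nq: "real N \<le> q' m"
  proof -
    have "1 / (4 * \<delta>) < q' m / 2"
    proof -
      have "1 / (2 * q' m) < \<delta>" using dlt by simp
      then have "1 < \<delta> * (2 * q' m)" using q'm by (simp add: field_simps)
      then show ?thesis using d0 by (simp add: field_simps)
    qed
    then show ?thesis using N2 q'm by linarith
  qed
  have Tm: "norm (T N m) \<ge> r * (\<rho> * \<rho> ^ Q)"
  proof -
    have "norm (1 - ee (real N * dd \<theta> k m)) \<ge> 1"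
      using Nd1 Nd2 unfolding \<delta>_def by (intro ee_ge) (auto simp: abs_mult)
    moreover have "r \<le> norm (u (qsf \<theta> k m))" by (rule lb)
    moreover have "\<rho> * \<rho> ^ Q \<ge> 0" using \<rho>1 by simp
    ultimately have "r * (\<rho> * \<rho> ^ Q) * 1 \<le> norm (u (qsf \<theta> k m)) * (\<rho> * \<rho> ^ Q) * norm (1 - ee (real N * dd \<theta> k m))"
      using r \<rho>1 by (intro mult_mono) auto
    then show ?thesis unfolding Tn Q_def by simp
  qed
  have Tlow: "norm (T N j) \<le> 2 * B * \<rho> * X" if "j < m" for j
  proof -
    have "qsf \<theta> k j \<le> Q'" unfolding Q'_def using that m_def by (intro qs_mono) auto
    then have "\<rho> ^ qsf \<theta> k j \<le> X" unfolding X_def using \<rho>1 by (intro power_increasing) auto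
    then have "norm (T N j) \<le> B * (\<rho> * X) * 2"
      unfolding Tn using ub ee_le2 \<rho>1 B0 X1 by (intro mult_mono) auto
    then show ?thesis by simp
  qed
  have Tup: "norm (T N j) \<le> 2 * pi * B * \<rho> * exp (- real j)" if "j > m" for j
  proof -
    have j1: "j \<ge> 1" "j \<ge> J1" using that m1 M1 unfolding m_def by auto
    have kk: "Suc (k m) \<le> k j" using sm that by (simp add: strict_mono_less Suc_leI)
    have qj: "q' m \<le> real (qsf \<theta> k j)"
      unfolding q'_def qs_real using q_mono[OF irr kk] by simp
    have q'j: "q' j > 0" unfolding q'_def using q_props[OF irr, of "Suc (k j)"] by (simp del: cf_q.simps)
    have "norm (1 - ee (real N * dd \<theta> k j)) \<le> 2 * pi * (real N * \<bar>dd \<theta> k j\<bar>)"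
      using ee_le[of "real N * dd \<theta> k j"] by (simp add: abs_mult)
    also have "\<dots> \<le> 2 * pi * (real (qsf \<theta> k j) * (1 / q' j))"
      using dd_bounds(1)[OF j1(1)] Nq qj unfolding q'_def
      by (intro mult_left_mono mult_mono) auto
    finally have e1: "norm (1 - ee (real N * dd \<theta> k j)) \<le> 2 * pi * (real (qsf \<theta> k j) / q' j)" by simp
    have "norm (T N j) \<le> B * (\<rho> * \<rho> ^ (qsf \<theta> k j)) * (2 * pi * (real (qsf \<theta> k j) / q' j))"
      unfolding Tn using ub e1 \<rho>1 B0 by (intro mult_mono) auto
    also have "\<dots> = 2 * pi * B * \<rho> * (\<rho> ^ qsf \<theta> k j * real (qsf \<theta> k j) / q' j)" by simp
    also have "\<dots> \<le> 2 * pi * B * \<rho> * exp (- real j)"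
      using J1[OF j1(2)] B0 \<rho>1 by (intro mult_left_mono) auto
    finally show ?thesis .
  qed
  define T' where "T' j = (if j = m then 0 else T N j)" for j
  define b where "b j = (if j < m then 2 * B * \<rho> * X else 0) + 2 * pi * B * \<rho> * exp (- real j)" for j
  have b_ge: "norm (T' j) \<le> b j" for j
  proof -
    have p1: "0 \<le> 2 * pi * B * \<rho> * exp (- real j)" using B0 \<rho>1 by simp
    have p2: "0 \<le> 2 * B * \<rho> * X" using B0 \<rho>1 X1 by simp
    show ?thesis
    proof (cases "j = m")
      case True then show ?thesis unfolding T'_def b_def using p1 p2 by simp
    next
      case False
      show ?thesis
      proof (cases "j < m")
        case True
        then have "norm (T' j) \<le> 2 * B * \<rho> * X" unfolding T'_def using False Tlow[of j] by simp
        moreover have "b j = 2 * B * \<rho> * X + 2 * pi * B * \<rho> * exp (- real j)" unfolding b_def using True by simp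
        ultimately show ?thesis using p1 by linarith
      next
        case F2: False
        then have "norm (T' j) \<le> 2 * pi * B * \<rho> * exp (- real j)" unfolding T'_def using False Tup[of j] by simp
        moreover have "b j = 0 + 2 * pi * B * \<rho> * exp (- real j)" unfolding b_def using F2 by simp
        ultimately show ?thesis by linarith
      qed
    qed
  qed
  have sb1: "summable (\<lambda>j. if j < m then 2 * B * \<rho> * X else 0)"
    by (rule summable_finite[of "{..<m}"]) auto
  have sb2: "summable (\<lambda>j. 2 * pi * B * \<rho> * exp (- real j))"
    by (intro summable_mult summable_exp_neg)
  have sb: "summable b" unfolding b_def using sb1 sb2 by (rule summable_add)
  have sT': "summable (\<lambda>j. norm (T' j))"
    by (rule summable_comparison_test'[OF sb, of 0]) (use b_ge in auto)
  have sb_val: "suminf b = real m * (2 * B * \<rho> * X) + C1"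
  proof -
    have "suminf b = (\<Sum>j. if j < m then 2 * B * \<rho> * X else 0) + (\<Sum>j. 2 * pi * B * \<rho> * exp (- real j))"
      unfolding b_def using suminf_add[OF sb1 sb2] by simp
    also have "(\<Sum>j. if j < m then 2 * B * \<rho> * X else 0) = (\<Sum>j<m. 2 * B * \<rho> * X)"
      by (subst suminf_finite[of "{..<m}"]) auto
    also have "(\<Sum>j. 2 * pi * B * \<rho> * exp (- real j)) = C1"
      unfolding C1_def S_def using suminf_mult[OF summable_exp_neg, of "2 * pi * B * \<rho>"] by simp
    finally show ?thesis by simp
  qed
  have sumT: "suminf (T N) = T N m + suminf T'"
  proof -
    have "(\<lambda>j. if j = m then T N j else 0) sums T N m" by (rule sums_single)
    moreover have "T' sums suminf T'" using summable_norm_cancel[OF sT'] by (simp add: summable_sums)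
    ultimately have "(\<lambda>j. (if j = m then T N j else 0) + T' j) sums (T N m + suminf T')" by (rule sums_add)
    moreover have "(\<lambda>j. (if j = m then T N j else 0) + T' j) = T N" unfolding T'_def by auto
    ultimately show ?thesis by (simp add: sums_iff)
  qed
  have low: "norm (suminf T') \<le> real m * (2 * B * \<rho> * X) + C1"
  proof -
    have "norm (suminf T') \<le> (\<Sum>j. norm (T' j))" by (rule summable_norm[OF sT'])
    also have "\<dots> \<le> suminf b" by (rule suminf_le[OF b_ge sT' sb])
    finally show ?thesis unfolding sb_val .
  qed
  have main: "norm (H u N z) \<ge> r * (\<rho> * \<rho> ^ Q) - (real m * (2 * B * \<rho> * X) + C1)"
  proof -
    have "T N m = suminf (T N) - suminf T'" using sumT by simp
    then have "norm (T N m) \<le> norm (suminf (T N)) + norm (suminf T')"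
      using norm_triangle_ineq4[of "suminf (T N)" "suminf T'"] by simp
    then show ?thesis unfolding HT using Tm low by linarith
  qed
  have QQ: "Q \<ge> 3 * Q'"
  proof -
    have kM: "k M \<ge> n1" using seq_suble[OF sm, of M] M1 by auto
    have kk: "Suc (k M) \<le> k m" using sm unfolding m_def by (simp add: strict_mono_less Suc_leI)
    have "exp (3 * real Q') \<le> of_int (cf_q \<theta> (Suc (k M)))" using n1[OF kM] unfolding Q'_def qs_real by simp
    also have "\<dots> \<le> real Q" unfolding Q_def qs_real using q_mono[OF irr kk] by simp
    finally have "exp (3 * real Q') \<le> real Q" .
    moreover have "1 + 3 * real Q' \<le> exp (3 * real Q')" by (rule exp_ge_add_one_self)
    ultimately show ?thesis by linarith
  qed
  have XB: "X \<ge> 1 + real Q' * (\<rho> - 1)"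
    unfolding X_def using Bernoulli_inequality[of "\<rho> - 1" Q'] \<rho>1 by (simp add: mult.commute)
  have Q'M: "real Q' \<ge> real M" unfolding Q'_def using qs_ge by simp
  have MX0: "real M * (\<rho> - 1) \<ge> X0"
  proof -
    have "real M \<ge> X0 / (\<rho> - 1)" by (rule M1(4))
    then show ?thesis using \<rho>1 by (simp add: field_simps)
  qed
  have XX0: "X \<ge> X0"
  proof -
    have "real M * (\<rho> - 1) \<le> real Q' * (\<rho> - 1)" using Q'M \<rho>1 by (intro mult_right_mono) auto
    then show ?thesis using XB MX0 by linarith
  qed
  have mX: "real m * c \<le> X"
  proof -
    have "real m = real M + 1" unfolding m_def by simp
    then have "real m * c \<le> (real Q' + 1) * c" using Q'M c0 by (intro mult_right_mono) auto
    also have "\<dots> = real Q' * c + c" by (simp add: algebra_simps)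
    also have "\<dots> \<le> real Q' * (\<rho> - 1) + 1" using c0 by (intro add_mono mult_left_mono) auto
    finally show ?thesis using XB by linarith
  qed
  have pQ: "\<rho> ^ Q \<ge> X * X * X"
  proof -
    have "\<rho> ^ Q \<ge> \<rho> ^ (3 * Q')" using QQ \<rho>1 by (intro power_increasing) auto
    moreover have "\<rho> ^ (3 * Q') = X * X * X" unfolding X_def by (simp add: numeral_3_eq_3 power_add)
    ultimately show ?thesis by simp
  qed
  have "r * (\<rho> * \<rho> ^ Q) - (real m * (2 * B * \<rho> * X) + C1) \<ge> K"
  proof -
    have rp: "r * \<rho> > 0" using r \<rho>1 by simp
    have "(r * \<rho>) * (X * X * X) \<le> (r * \<rho>) * \<rho> ^ Q" using pQ rp by (intro mult_left_mono) auto
    then have I1: "r * (\<rho> * \<rho> ^ Q) \<ge> (r * \<rho>) * (X * X * X)" by (simp add: algebra_simps)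
    have I2: "(r * \<rho>) * (X * X * X) \<ge> (r * \<rho>) * X0 * (X * X)"
    proof -
      have "X0 * (X * X) \<le> X * (X * X)" using XX0 X1 by (intro mult_right_mono) auto
      then have "(r * \<rho>) * (X0 * (X * X)) \<le> (r * \<rho>) * (X * (X * X))" using rp by (intro mult_left_mono) auto
      then show ?thesis by (simp add: ac_simps)
    qed
    have E: "(r * \<rho>) * X0 = K' + C1 + 2 * B * \<rho> / c" unfolding X0_def using r \<rho>1 by simp
    have E2: "(r * \<rho>) * X0 * (X * X) = (K' + C1) * (X * X) + (2 * B * \<rho> / c) * (X * X)"
      by (simp only: E distrib_right)
    have A1: "r * (\<rho> * \<rho> ^ Q) \<ge> (K' + C1) * (X * X) + (2 * B * \<rho> / c) * (X * X)"
      using I1 I2 E2 by linarith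
    have A2: "(K' + C1) * (X * X) \<ge> K' + C1"
    proof -
      have "X * X \<ge> 1" using mult_mono[OF X1 X1] X1 by simp
      moreover have "K' + C1 \<ge> 0" unfolding K'_def using C10 by simp
      ultimately show ?thesis using mult_left_mono[of 1 "X * X" "K' + C1"] by simp
    qed
    have A3: "(2 * B * \<rho> / c) * (X * X) \<ge> real m * (2 * B * \<rho> * X)"
    proof -
      have "real m * (2 * B * \<rho> * X) = (2 * B * \<rho> / c) * ((real m * c) * X)" using c0 by (simp add: field_simps)
      also have "\<dots> \<le> (2 * B * \<rho> / c) * (X * X)"
        using mX X1 B0 \<rho>1 c0 by (intro mult_left_mono mult_right_mono) auto
      finally show ?thesis .
    qed
    show ?thesis using A1 A2 A3 unfolding K'_def by linarith
  qed
  then show ?thesis using main by (intro exI[of _ N]) linarith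
qed

end


lemma n1_pow: fixes t :: real assumes "0 \<le> t" "t < 1" shows "real (Suc n) * t ^ n \<le> 1 / (1 - t)"
proof -
  have "real (card {..<Suc n}) * t ^ n \<le> (\<Sum>i<Suc n. t ^ i)"
    using assms by (intro sum_bounded_below power_decreasing) auto
  also have "\<dots> = (1 - t ^ Suc n) / (1 - t)" using assms by (subst sum_gp_strict) auto
  also have "\<dots> \<le> 1 / (1 - t)" using assms by (intro divide_right_mono) auto
  finally show ?thesis by simp
qed

lemma pow_diff_le: fixes z z' :: complex assumes "norm z \<le> s" "norm z' \<le> s"
  shows "norm (z' ^ n - z ^ n) \<le> real n * s ^ (n - 1) * norm (z' - z)"
proof -
  have s0: "s \<ge> 0" using assms(1) norm_ge_zero order_trans by blast
  have "norm (z' ^ n - z ^ n) = norm (z' - z) * norm (\<Sum>i<n. z ^ (n - Suc i) * z' ^ i)"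
    by (simp add: power_diff_sumr2 norm_mult)
  also have "norm (\<Sum>i<n. z ^ (n - Suc i) * z' ^ i) \<le> (\<Sum>i<n. s ^ (n - 1))"
  proof -
    have "norm (z ^ (n - Suc i) * z' ^ i) \<le> s ^ (n - 1)" if "i < n" for i
    proof -
      have "norm (z ^ (n - Suc i) * z' ^ i) \<le> s ^ (n - Suc i) * s ^ i"
        unfolding norm_mult norm_power using assms s0 by (intro mult_mono power_mono) auto
      also have "\<dots> = s ^ (n - 1)" using that by (simp add: power_add[symmetric])
      finally show ?thesis .
    qed
    then show ?thesis by (intro order_trans[OF norm_sum sum_mono]) auto
  qed
  then have "norm (z' - z) * norm (\<Sum>i<n. z ^ (n - Suc i) * z' ^ i) \<le> norm (z' - z) * (\<Sum>i<n. s ^ (n - 1))"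
    by (intro mult_left_mono) auto
  finally show ?thesis by (simp add: algebra_simps)
qed

context bnd begin

lemma orbit_unbounded:
  assumes z: "norm z > 1" and r: "r > 0" and lb: "\<And>j. r \<le> norm (u (qsf \<theta> k j))"
  shows "\<not> bounded (range (\<lambda>N. (A_map \<theta> (qsf \<theta> k) u ^^ N) (w, z)))"
proof
  assume "bounded (range (\<lambda>N. (A_map \<theta> (qsf \<theta> k) u ^^ N) (w, z)))"
  then obtain a where a: "\<And>N. norm ((A_map \<theta> (qsf \<theta> k) u ^^ N) (w, z)) \<le> a"
    unfolding bounded_iff by blast
  obtain N where N: "norm (H u N z) \<ge> a + norm w + 1" using H_big[OF z r lb] by blast
  have "norm (L ^ N * (w + H u N z)) \<le> norm ((A_map \<theta> (qsf \<theta> k) u ^^ N) (w, z))"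
    unfolding iter by (rule norm_fst_le)
  moreover have "norm (L ^ N * (w + H u N z)) = norm (w + H u N z)"
    by (simp only: norm_mult norm_Lpow mult_1)
  ultimately have "norm (w + H u N z) \<le> norm ((A_map \<theta> (qsf \<theta> k) u ^^ N) (w, z))" by simp
  moreover have "norm (H u N z) \<le> norm (w + H u N z) + norm w"
    using norm_triangle_ineq4[of "w + H u N z" w] by simp
  ultimately show False using a[of N] N by linarith
qed

lemma H_small: assumes "norm z < 1" shows "norm (H u N z) \<le> 2 * B / (1 - norm z)"
proof -
  let ?T = "\<lambda>j. u (qsf \<theta> k j) * z ^ (qsf \<theta> k j + 1) * (1 - L ^ (N * qsf \<theta> k j))"
  have B0: "B \<ge> 0" by (rule B_nonneg)
  have bd: "norm (?T j) \<le> 2 * B * norm z ^ j" for j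
  proof -
    have "norm (?T j) = norm (u (qsf \<theta> k j)) * (norm z * norm z ^ (qsf \<theta> k j)) * norm (1 - ee (real N * dd \<theta> k j))"
      by (rule term_norm)
    also have "\<dots> \<le> B * (norm z ^ j) * 2"
    proof -
      have "norm z * norm z ^ (qsf \<theta> k j) = norm z ^ (Suc (qsf \<theta> k j))" by simp
      also have "\<dots> \<le> norm z ^ j" using qs_ge[of j] assms by (intro power_decreasing) auto
      finally show ?thesis using ub ee_le2 B0 by (intro mult_mono) auto
    qed
    finally show ?thesis by simp
  qed
  have sg: "summable (\<lambda>j. 2 * B * norm z ^ j)" using assms by (intro summable_mult summable_geometric) auto
  have sn: "summable (\<lambda>j. norm (?T j))" by (rule S1)
  have "norm (H u N z) \<le> (\<Sum>j. norm (?T j))" unfolding H_def by (rule summable_norm[OF sn])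
  also have "\<dots> \<le> (\<Sum>j. 2 * B * norm z ^ j)" by (rule suminf_le[OF bd sn sg])
  also have "\<dots> = 2 * B * (1 / (1 - norm z))"
    using suminf_mult[of "\<lambda>j. norm z ^ j" "2 * B"] summable_geometric[of "norm z"] suminf_geometric[of "norm z"] assms
    by simp
  finally show ?thesis by simp
qed

lemma H_lip: assumes s: "s < 1" and z: "norm z \<le> s" and z': "norm z' \<le> s"
  shows "norm (H u N z' - H u N z) \<le> 2 * B / (1 - sqrt s) ^ 2 * norm (z' - z)"
proof -
  let ?T = "\<lambda>z j. u (qsf \<theta> k j) * z ^ (qsf \<theta> k j + 1) * (1 - L ^ (N * qsf \<theta> k j))"
  have B0: "B \<ge> 0" by (rule B_nonneg)
  have s0: "s \<ge> 0" using z norm_ge_zero order_trans by blast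
  define t where "t = sqrt s"
  have t: "t \<ge> 0" "t < 1" "t * t = s" unfolding t_def using s s0 by (auto simp: real_sqrt_lt_1_iff)
  have bd: "norm (?T z' j - ?T z j) \<le> (2 * B / (1 - t) * norm (z' - z)) * t ^ j" for j
  proof -
    let ?q = "qsf \<theta> k j"
    have "?T z' j - ?T z j = u ?q * (z' ^ (?q + 1) - z ^ (?q + 1)) * (1 - L ^ (N * ?q))"
      by (simp add: algebra_simps)
    then have "norm (?T z' j - ?T z j) = norm (u ?q * (z' ^ (?q + 1) - z ^ (?q + 1)) * (1 - L ^ (N * ?q)))"
      by simp
    also have "\<dots> = norm (u ?q) * norm (z' ^ (?q + 1) - z ^ (?q + 1)) * norm (1 - ee (real N * dd \<theta> k j))"
      unfolding lam_qs by (simp only: norm_mult)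
    also have "\<dots> \<le> B * (real (Suc ?q) * s ^ ?q * norm (z' - z)) * 2"
      using ub ee_le2 B0 s0 pow_diff_le[OF z z', of "?q + 1"] by (intro mult_mono) auto
    also have "real (Suc ?q) * s ^ ?q = (real (Suc ?q) * t ^ ?q) * t ^ ?q"
      using t by (simp add: power_mult_distrib[symmetric])
    also have "\<dots> \<le> (1 / (1 - t)) * t ^ j"
      using n1_pow[OF t(1) t(2), of ?q] qs_ge[of j] t by (intro mult_mono power_decreasing) auto
    finally have "norm (?T z' j - ?T z j) \<le> B * ((1 / (1 - t)) * t ^ j * norm (z' - z)) * 2"
      using B0 by (simp add: mult_left_mono mult_right_mono)
    then show ?thesis by (simp add: algebra_simps)
  qed
  have s1: "summable (?T z')" "summable (?T z)" using summable_norm_cancel[OF S1] by auto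
  have sg: "summable (\<lambda>j. (2 * B / (1 - t) * norm (z' - z)) * t ^ j)"
    using t by (intro summable_mult summable_geometric) auto
  have sn: "summable (\<lambda>j. norm (?T z' j - ?T z j))"
    by (rule summable_comparison_test'[OF sg, of 0]) (use bd in auto)
  have "H u N z' - H u N z = (\<Sum>j. ?T z' j - ?T z j)" unfolding H_def using suminf_diff[OF s1] .
  then have "norm (H u N z' - H u N z) \<le> (\<Sum>j. norm (?T z' j - ?T z j))" using summable_norm[OF sn] by simp
  also have "\<dots> \<le> (\<Sum>j. (2 * B / (1 - t) * norm (z' - z)) * t ^ j)" by (rule suminf_le[OF bd sn sg])
  also have "\<dots> = (2 * B / (1 - t) * norm (z' - z)) * (1 / (1 - t))"
    using suminf_mult[OF summable_geometric[of t], of "2 * B / (1 - t) * norm (z' - z)"] suminf_geometric[of t] t by simp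
  also have "\<dots> = 2 * B / (1 - sqrt s) ^ 2 * norm (z' - z)" unfolding t_def by (simp add: power2_eq_square)
  finally show ?thesis .
qed

end


lemma dist_pair_le: "dist (a, b) (c, d) \<le> dist a c + dist b d"
  unfolding dist_Pair_Pair using sqrt_add_le_add_sqrt[of "(dist a c)^2" "(dist b d)^2"] by simp

context bnd begin

lemma disc_in_fatou: "UNIV \<times> ball 0 1 \<subseteq> fatou_set (A_map \<theta> (qsf \<theta> k) u)"
proof
  fix x :: "complex \<times> complex" assume x: "x \<in> UNIV \<times> ball 0 1"
  let ?S = "UNIV \<times> ball (0::complex) 1"
  let ?F = "A_map \<theta> (qsf \<theta> k) u"
  have oS: "open ?S" by (intro open_Times) auto
  have eq: "\<forall>e>0. \<exists>d>0. \<forall>y'\<in>?S. dist y' y < d \<longrightarrow> (\<forall>N. dist ((?F ^^ N) y') ((?F ^^ N) y) < e)"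
    if y: "y \<in> ?S" for y
  proof (intro allI impI)
    fix e :: real assume e: "e > 0"
    obtain w z where yy: "y = (w, z)" by (cases y)
    have z1: "norm z < 1" using y yy by auto
    define s where "s = (1 + norm z) / 2"
    have s: "s < 1" "norm z \<le> s" unfolding s_def using z1 by auto
    define K where "K = 2 * B / (1 - sqrt s) ^ 2"
    have K0: "K \<ge> 0" unfolding K_def using B_nonneg by simp
    define d where "d = min ((1 - norm z) / 2) (e / (2 + K))"
    have d0: "d > 0" unfolding d_def using z1 e K0 by auto
    have d1: "d \<le> (1 - norm z) / 2" "d \<le> e / (2 + K)" unfolding d_def by (rule min.cobounded1, rule min.cobounded2)
    show "\<exists>d>0. \<forall>y'\<in>?S. dist y' y < d \<longrightarrow> (\<forall>N. dist ((?F ^^ N) y') ((?F ^^ N) y) < e)"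
    proof (intro exI[of _ d] conjI ballI impI allI d0)
      fix y' N assume y': "y' \<in> ?S" and dy: "dist y' y < d"
      obtain w' z' where yy': "y' = (w', z')" by (cases y')
      have dw: "dist w' w \<le> dist y' y" using dist_fst_le[of y' y] yy yy' by simp
      have dz: "dist z' z \<le> dist y' y" using dist_snd_le[of y' y] yy yy' by simp
      have z's: "norm z' \<le> s"
      proof -
        have "norm z' \<le> norm z + dist z' z" by (metis dist_norm norm_triangle_sub add.commute)
        then have a: "norm z' < norm z + d" using dz dy by linarith
        have b: "norm z + d \<le> (1 + norm z) / 2" using d1(1) by (simp add: field_simps)
        show ?thesis using a b unfolding s_def by linarith
      qed
      have lip: "norm (H u N z' - H u N z) \<le> K * dist z' z"
        unfolding K_def dist_norm by (rule H_lip[OF s(1) s(2) z's])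
      have "dist ((?F ^^ N) y') ((?F ^^ N) y) \<le> dist (L ^ N * (w' + H u N z')) (L ^ N * (w + H u N z)) + dist (L ^ N * z') (L ^ N * z)"
        unfolding yy yy' iter by (rule dist_pair_le)
      also have "\<dots> = norm ((w' - w) + (H u N z' - H u N z)) + dist z' z"
      proof -
        have r: "dist (L ^ N * a) (L ^ N * b) = norm (a - b)" for a b
          by (simp only: dist_norm right_diff_distrib[symmetric] norm_mult norm_Lpow mult_1)
        have "(w' + H u N z') - (w + H u N z) = (w' - w) + (H u N z' - H u N z)" by simp
        then show ?thesis unfolding r by (simp add: dist_norm algebra_simps)
      qed
      also have "\<dots> \<le> dist w' w + K * dist z' z + dist z' z"
        using norm_triangle_ineq[of "w' - w" "H u N z' - H u N z"] lip by (simp add: dist_norm)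
      also have "\<dots> \<le> (2 + K) * dist y' y"
        using dw dz K0 mult_left_mono[OF dz K0] by (simp add: algebra_simps)
      also have "\<dots> < (2 + K) * d" using dy K0 by (intro mult_strict_left_mono) auto
      also have "\<dots> \<le> (2 + K) * (e / (2 + K))" using d1 K0 by (intro mult_left_mono) auto
      also have "\<dots> = e" using K0 by simp
      finally show "dist ((?F ^^ N) y') ((?F ^^ N) y) < e" .
    qed
  qed
  show "x \<in> fatou_set ?F" unfolding fatou_set_def using x oS eq by blast
qed


lemma boundary_not_fatou:
  assumes r: "r > 0" and lb: "\<And>j. r \<le> norm (u (qsf \<theta> k j))" and z: "norm z = 1"
  shows "(w, z) \<notin> fatou_set (A_map \<theta> (qsf \<theta> k) u)"
proof
  let ?F = "A_map \<theta> (qsf \<theta> k) u"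
  assume "(w, z) \<in> fatou_set ?F"
  then obtain U where U: "open U" "(w, z) \<in> U"
    and eqc: "\<forall>y\<in>U. \<forall>e>0. \<exists>d>0. \<forall>y'\<in>U. dist y' y < d \<longrightarrow> (\<forall>N. dist ((?F ^^ N) y') ((?F ^^ N) y) < e)"
    unfolding fatou_set_def by blast
  have h: "\<forall>e>0. \<exists>d>0. \<forall>y'\<in>U. dist y' (w, z) < d \<longrightarrow> (\<forall>N. dist ((?F ^^ N) y') ((?F ^^ N) (w, z)) < e)"
    using eqc U(2) by (rule bspec)
  have "\<exists>d>0. \<forall>y'\<in>U. dist y' (w, z) < d \<longrightarrow> (\<forall>N. dist ((?F ^^ N) y') ((?F ^^ N) (w, z)) < 1)"
    using h[rule_format, OF zero_less_one] .
  then obtain d where d: "d > 0" and dd: "\<And>y' N. y' \<in> U \<Longrightarrow> dist y' (w, z) < d \<Longrightarrow> dist ((?F ^^ N) y') ((?F ^^ N) (w, z)) < 1"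
    by blast
  obtain \<epsilon> where \<epsilon>: "\<epsilon> > 0" "ball (w, z) \<epsilon> \<subseteq> U" using U open_contains_ball by blast
  define \<eta> where "\<eta> = min (min d \<epsilon>) 1 / 2"
  have \<eta>: "\<eta> > 0" "\<eta> < d" "\<eta> < \<epsilon>" "\<eta> < 1" unfolding \<eta>_def using d \<epsilon> by auto
  define y1 where "y1 = (w, of_real (1 - \<eta>) * z)"
  define y2 where "y2 = (w, of_real (1 + \<eta>) * z)"
  have dist1: "dist y1 (w, z) = \<eta>"
  proof -
    have "of_real (1 - \<eta>) * z - z = - (of_real \<eta> * z)" by (simp add: algebra_simps)
    then have "dist (of_real (1 - \<eta>) * z) z = \<eta>" using z \<eta> by (simp add: dist_norm norm_mult)
    then show ?thesis unfolding y1_def dist_Pair_Pair using \<eta> by simp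
  qed
  have dist2: "dist y2 (w, z) = \<eta>"
  proof -
    have "of_real (1 + \<eta>) * z - z = of_real \<eta> * z" by (simp add: algebra_simps)
    then have "dist (of_real (1 + \<eta>) * z) z = \<eta>" using z \<eta> by (simp add: dist_norm norm_mult)
    then show ?thesis unfolding y2_def dist_Pair_Pair using \<eta> by simp
  qed
  have "y1 \<in> ball (w, z) \<epsilon>" "y2 \<in> ball (w, z) \<epsilon>" unfolding mem_ball using dist1 dist2 \<eta> by (simp_all add: dist_commute)
  then have inU: "y1 \<in> U" "y2 \<in> U" using \<epsilon>(2) by auto
  have close: "dist ((?F ^^ N) y2) ((?F ^^ N) y1) < 2" for N
  proof -
    have "dist ((?F ^^ N) y2) ((?F ^^ N) y1) \<le> dist ((?F ^^ N) y2) ((?F ^^ N) (w, z)) + dist ((?F ^^ N) y1) ((?F ^^ N) (w, z))"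
      by (rule dist_triangle2)
    then show ?thesis using dd[OF inU(1), of N] dd[OF inU(2), of N] dist1 dist2 \<eta> by linarith
  qed
  have nz1: "norm (of_real (1 - \<eta>) * z) = 1 - \<eta>"
  proof -
    have "norm (of_real (1 - \<eta>) * z) = \<bar>1 - \<eta>\<bar> * norm z" by (simp only: norm_mult norm_of_real)
    then show ?thesis using z \<eta> by simp
  qed
  define R where "R = norm w + 2 * B / \<eta> + 1"
  have bnd1: "norm ((?F ^^ N) y1) \<le> R" for N
  proof -
    let ?z1 = "of_real (1 - \<eta>) * z"
    have "norm ((?F ^^ N) y1) \<le> norm (L ^ N * (w + H u N ?z1)) + norm (L ^ N * ?z1)"
      unfolding y1_def iter by (rule norm_Pair_le)
    also have "\<dots> = norm (w + H u N ?z1) + norm ?z1" by (simp only: norm_mult norm_Lpow mult_1)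
    also have "\<dots> \<le> norm w + 2 * B / (1 - norm ?z1) + 1"
      using norm_triangle_ineq[of w "H u N ?z1"] H_small[of ?z1 N] nz1 \<eta> by simp
    finally show ?thesis unfolding R_def nz1 by simp
  qed
  have "bounded (range (\<lambda>N. (?F ^^ N) (w, of_real (1 + \<eta>) * z)))"
    unfolding bounded_iff
  proof (intro exI[of _ "R + 2"] ballI)
    fix x assume "x \<in> range (\<lambda>N. (?F ^^ N) (w, of_real (1 + \<eta>) * z))"
    then obtain N where x: "x = (?F ^^ N) y2" unfolding y2_def by blast
    have "norm x \<le> norm ((?F ^^ N) y1) + dist ((?F ^^ N) y2) ((?F ^^ N) y1)"
      unfolding x by (metis dist_norm norm_triangle_sub add.commute)
    then show "norm x \<le> R + 2" using bnd1[of N] close[of N] by linarith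
  qed
  moreover have "norm (of_real (1 + \<eta>) * z) > 1"
  proof -
    have "norm (of_real (1 + \<eta>) * z) = \<bar>1 + \<eta>\<bar> * norm z" by (simp only: norm_mult norm_of_real)
    then show ?thesis using z \<eta> by simp
  qed
  ultimately show False using orbit_unbounded[OF _ r lb, of "of_real (1 + \<eta>) * z" w] by simp
qed

lemma disc_component:
  assumes r: "r > 0" and lb: "\<And>j. r \<le> norm (u (qsf \<theta> k j))"
  shows "is_fatou_component (A_map \<theta> (qsf \<theta> k) u) (UNIV \<times> ball 0 1)"
proof -
  let ?S = "(UNIV::complex set) \<times> ball (0::complex) 1" and ?F = "A_map \<theta> (qsf \<theta> k) u"
  have sub: "?S \<subseteq> fatou_set ?F" by (rule disc_in_fatou)
  have "convex ?S" by (rule convex_Times) (simp_all add: convex_ball)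
  then have conn: "connected ?S" by (rule convex_connected)
  have ne: "?S \<noteq> {}" by auto
  have oS: "open ?S" by (intro open_Times) auto
  have fr: "frontier ?S \<inter> fatou_set ?F = {}"
  proof -
    have "p \<notin> fatou_set ?F" if p: "p \<in> frontier ?S" for p
    proof -
      obtain w z where pp: "p = (w, z)" by (cases p)
      have "closure ?S \<subseteq> UNIV \<times> cball 0 1"
        by (intro closure_minimal) (auto intro: closed_Times)
      then have "norm z \<le> 1" using p pp unfolding frontier_def by auto
      moreover have "p \<notin> ?S" using p oS unfolding frontier_def interior_open[OF oS] by auto
      then have "\<not> norm z < 1" using pp by auto
      ultimately have "norm z = 1" by simp
      then show ?thesis unfolding pp by (rule boundary_not_fatou[OF r lb])
    qed
    then show ?thesis by blast
  qed
  show ?thesis unfolding is_fatou_component_def in_components_maximal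
  proof (intro conjI allI impI ne sub conn)
    fix D assume D: "D \<noteq> {} \<and> ?S \<subseteq> D \<and> D \<subseteq> fatou_set ?F \<and> connected D"
    show "D = ?S"
    proof (rule ccontr)
      assume "D \<noteq> ?S"
      then have "D - ?S \<noteq> {}" using D by blast
      moreover have "D \<inter> ?S \<noteq> {}" using D ne by blast
      ultimately have "D \<inter> frontier ?S \<noteq> {}" using D by (intro connected_Int_frontier) auto
      then show False using D fr by auto
    qed
  qed
qed

end


lemma generic:
  fixes \<theta> :: real and k :: "nat \<Rightarrow> nat" and u :: "nat \<Rightarrow> complex"
  assumes S: "sett \<theta> k" and ub: "\<And>m. norm (u m) \<le> B" and r: "r > 0" and lb: "\<And>m. r \<le> norm (u m)"
  shows "is_fatou_component (A_map \<theta> (qsf \<theta> k) u) (UNIV \<times> ball 0 1) \<and>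
     (\<forall>w z. norm z > 1 \<longrightarrow> \<not> bounded (range (\<lambda>N. (A_map \<theta> (qsf \<theta> k) u ^^ N) (w, z))))"
proof -
  interpret bnd \<theta> k u B using S ub by (simp add: bnd_def bnd_axioms_def)
  show ?thesis using disc_component[OF r lb] orbit_unbounded[OF _ r lb] by blast
qed

definition E1set :: "(nat \<Rightarrow>\<^sub>C complex) set" where
  "E1set = {u. \<exists>r>0. \<forall>m. r \<le> norm (apply_bcontfun u m)}"

lemma E1_open: "open E1set"
  unfolding open_contains_ball
proof
  fix u assume "u \<in> E1set"
  then obtain r where r: "r > 0" "\<And>m. r \<le> norm (apply_bcontfun u m)" unfolding E1set_def by blast
  show "\<exists>\<epsilon>>0. ball u \<epsilon> \<subseteq> E1set"
  proof (intro exI[of _ "r/2"] conjI subsetI)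
    show "r / 2 > 0" using r by simp
    fix v assume v: "v \<in> ball u (r/2)"
    have "r / 2 \<le> norm (apply_bcontfun v m)" for m
    proof -
      have "dist (apply_bcontfun v m) (apply_bcontfun u m) \<le> dist v u" by (rule dist_bounded)
      also have "\<dots> < r / 2" using v by (simp add: dist_commute)
      finally have "norm (apply_bcontfun v m - apply_bcontfun u m) < r / 2" by (simp add: dist_norm)
      moreover have "norm (apply_bcontfun u m) \<le> norm (apply_bcontfun v m) + norm (apply_bcontfun v m - apply_bcontfun u m)"
        using norm_triangle_ineq4[of "apply_bcontfun v m" "apply_bcontfun v m - apply_bcontfun u m"] by simp
      ultimately show ?thesis using r(2)[of m] by linarith
    qed
    then show "v \<in> E1set" unfolding E1set_def using r by (intro CollectI exI[of _ "r/2"]) auto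
  qed
qed

lemma E1_dense: "closure E1set = UNIV"
proof -
  have "u \<in> closure E1set" for u
    unfolding closure_approachable
  proof (intro allI impI)
    fix e :: real assume e: "e > 0"
    define c where "c = e / 2"
    have c: "c > 0" "c < e" unfolding c_def using e by auto
    define f where "f m = apply_bcontfun u m + of_real c * (if apply_bcontfun u m = 0 then 1 else apply_bcontfun u m / of_real (norm (apply_bcontfun u m)))" for m
    have nf: "norm (f m) = norm (apply_bcontfun u m) + c" for m
    proof (cases "apply_bcontfun u m = 0")
      case True then show ?thesis unfolding f_def using c by simp
    next
      case False
      let ?a = "apply_bcontfun u m"
      have "f m = of_real (1 + c / norm ?a) * ?a" unfolding f_def using False by (simp add: field_simps)
      then have "norm (f m) = \<bar>1 + c / norm ?a\<bar> * norm ?a" by (simp only: norm_mult norm_of_real)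
      also have "\<dots> = norm ?a + c" using False c by (simp add: field_simps)
      finally show ?thesis .
    qed
    have df: "dist (f m) (apply_bcontfun u m) = c" for m
    proof (cases "apply_bcontfun u m = 0")
      case True then show ?thesis unfolding f_def dist_norm using c by simp
    next
      case False
      have "norm (apply_bcontfun u m / of_real (norm (apply_bcontfun u m))) = 1" using False by (simp add: norm_divide)
      then show ?thesis unfolding f_def dist_norm using False c by (simp add: norm_mult norm_divide)
    qed
    have fb: "f \<in> bcontfun"
    proof (rule bcontfun_normI)
      show "continuous_on UNIV f" by simp
      fix m show "norm (f m) \<le> norm u + c" unfolding nf using norm_bounded[of u m] by simp
    qed
    define v where "v = Bcontfun f"
    have vf: "apply_bcontfun v = f" unfolding v_def using fb by (simp add: Bcontfun_inverse)
    show "\<exists>y\<in>E1set. dist y u < e"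
    proof (intro bexI)
      have "dist v u \<le> c" by (rule dist_bound) (simp add: vf df)
      then show "dist v u < e" using c by simp
      show "v \<in> E1set" unfolding E1set_def using c by (intro CollectI exI[of _ c]) (auto simp: vf nf)
    qed
  qed
  then show ?thesis by auto
qed

lemma E1_gdelta: "gdelta E1set"
proof -
  have "gdelta (\<Inter>((\<lambda>n::nat. E1set) ` UNIV))" by (rule gdelta.intros) (rule E1_open)
  then show ?thesis by simp
qed

theorem theorem2p4:
  fixes \<theta> :: real and k :: "nat \<Rightarrow> nat"
  assumes irrat: "\<theta> \<notin> \<rat>"
    and growth: "filterlim (\<lambda>n. ln (real_of_int (cf_q \<theta> (Suc n))) / real_of_int (cf_q \<theta> n))
                   at_top sequentially"
    and subseq: "strict_mono k"
  defines "qs \<equiv> (\<lambda>n. nat (cf_q \<theta> (k n)))"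
  shows "\<exists>E1 :: (nat \<Rightarrow>\<^sub>C complex) set. gdelta E1 \<and> closure E1 = UNIV \<and>
           (\<forall>u\<in>E1. is_fatou_component (A_map \<theta> qs (apply_bcontfun u)) (UNIV \<times> ball 0 1) \<and>
              (\<forall>w z. norm z > 1 \<longrightarrow>
                 \<not> bounded (range (\<lambda>N. (A_map \<theta> qs (apply_bcontfun u) ^^ N) (w, z)))))
         \<and> is_fatou_component (A_map \<theta> qs (\<lambda>_. 1)) (UNIV \<times> ball 0 1)
         \<and> (\<forall>w z. norm z > 1 \<longrightarrow>
               \<not> bounded (range (\<lambda>N. (A_map \<theta> qs (\<lambda>_. 1) ^^ N) (w, z))))"
proof -
  have S: "sett \<theta> k" using irrat growth subseq by (simp add: sett_def)
  have qs: "qs = qsf \<theta> k" unfolding qs_def qsf_def by (rule ext) simp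
  have A: "is_fatou_component (A_map \<theta> qs (apply_bcontfun u)) (UNIV \<times> ball 0 1) \<and>
              (\<forall>w z. norm z > 1 \<longrightarrow>
                 \<not> bounded (range (\<lambda>N. (A_map \<theta> qs (apply_bcontfun u) ^^ N) (w, z))))" if u: "u \<in> E1set" for u
  proof -
    obtain r where r: "r > 0" "\<And>m. r \<le> norm (apply_bcontfun u m)" using u unfolding E1set_def by blast
    show ?thesis unfolding qs by (rule generic[OF S norm_bounded r])
  qed
  have B: "is_fatou_component (A_map \<theta> qs (\<lambda>_. 1)) (UNIV \<times> ball 0 1)
         \<and> (\<forall>w z. norm z > 1 \<longrightarrow>
               \<not> bounded (range (\<lambda>N. (A_map \<theta> qs (\<lambda>_. 1) ^^ N) (w, z))))"
    unfolding qs by (rule generic[OF S, of _ 1 1]) auto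
  show ?thesis using A B E1_gdelta E1_dense by blast
qed


end
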